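(* Let $(G,L,v)$ be a reachable triple, $i\in[4]$ a color, and $D$ a nonnegative integer. Then $0\le P(G,L,v,i,D)\le \tfrac12$.
   Context: Colors are $[4]=\{1,2,3,4\}$. A list-coloring instance $(G,L)$ is a finite simple graph $G=(V,E)$ with $L:V\to 2^{[4]}$. For a vertex $v$, $G_v$ is $G$ with $v$ and its incident edges removed, and $G_{v,w}=(G_v)_w$. If $v$ has neighbors $v_1,\dots,v_d$ (in a fixed order), then for $k\in[d]$ and a color $j$, $L_{k,j}$ is the list assignment on $G_v$ with $L_{k,j}(v_\ell)=L(v_\ell)\setminus\{j\}$ for $\ell<k$ and $L_{k,j}(u)=L(u)$ for all other vertices $u$ (so $L_{1,j}=L$). A triple $(G,L,v)$ with $v\in V$ is reachable if $\deg_G(u)\le3$ and $|L(u)|\ge\deg_G(u)+1$ for every $u\in V$, and moreover $\deg_G(v)\le2$ and $|L(v)|\ge\deg_G(v)+2$. The procedure $P(G,L,v,i,D)$ ($i\in[4]$, $D$ an integer) is defined recursively (empty products equal $1$): (a) If $i\notin L(v)$, return $0$. Otherwise, if $D\le 0$ or $\deg_G(v)=0$, return $1/|L(v)|$. (b) If $\deg_G(v)=1$ with neighbor $v_1$: let $x=P(G_v,L,v_1,i,D-1)$. If $|L(v)|=2$, say $L(v)=\{i,j\}$, let $y=P(G_v,L,v_1,j,D-1)$ and return $\frac{1-x}{2-x-y}$. If $|L(v)|=4$, return $\frac{1-x}{3}$. If $|L(v)|=3$, let $j$ be the unique color in $[4]\setminus L(v)$, $y=P(G_v,L,v_1,j,D-1)$,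 and return $\frac{1-x}{2+y}$. (c) If $\deg_G(v)=2$: order its neighbors $v_1,v_2$ so that $\deg_G(v_1)\ge\deg_G(v_2)$ and, if $\deg_G(v_1)=\deg_G(v_2)=1$, so that $i\notin L(v_1)$ implies $i\notin L(v_2)$. Let $u_1,\dots,u_{d_1}$ be the neighbors of $v_1$ in $G_v$ (fixed order) and for $k\in[d_1]$, $w\in[4]$ let $L'_{k,w}$ be the list assignment on $G_{v,v_1}$ with $L'_{k,w}(u_\ell)=L(u_\ell)\setminus\{w\}$ for $\ell<k$ and $L'_{k,w}(u)=L(u)$ otherwise. Set $x_{k,w}=P(G_{v,v_1},L'_{k,w},u_k,w,D-1)$ for $k\in[d_1]$, $w\in L(v_1)$. For $j\in L(v)$ set $f_j=0$ if $j\notin L(v_1)$ and otherwise $f_j=\frac{\prod_{k=1}^{d_1}(1-x_{k,j})}{\sum_{w\in L(v_1)}\prod_{k=1}^{d_1}(1-x_{k,w})}$, and set $y_j=P(G_v,L_{2,j},v_2,j,D-1)$. Return $\frac{(1-f_i)(1-y_i)}{\sum_{j\in L(v)}(1-f_j)(1-y_j)}$. (d) If $\deg_G(v)=3$ with neighbors $v_1,v_2,v_3$: for $j\in L(v)$ let $x_j=P(G_v,L_{1,j},v_1,j,D-1)$, $y_j=P(G_v,L_{2,j},v_2,j,D-1)$, $z_j=P(G_v,L_{3,j},v_3,j,D-1)$, and return $\frac{(1-x_i)(1-y_i)(1-z_i)}{\sum_{j\in L(v)}(1-x_j)(1-y_j)(1-z_j)}$. For reachable triples, all recursive calls are again on reachable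 triples and case (d) never occurs. *)

theory Defs
  imports Main "HOL.Real"
begin

type_synonym 'a graph = "'a set \<times> ('a \<times> 'a) set"

definition verts :: "'a graph \<Rightarrow> 'a set" where "verts G = fst G"
definition edges :: "'a graph \<Rightarrow> ('a \<times> 'a) set" where "edges G = snd G"

definition simple_graph :: "'a graph \<Rightarrow> bool" where
  "simple_graph G \<longleftrightarrow> finite (verts G) \<and> edges G \<subseteq> verts G \<times> verts G
     \<and> (\<forall>a b. (a, b) \<in> edges G \<longrightarrow> (b, a) \<in> edges G)
     \<and> (\<forall>a. (a, a) \<notin> edges G)"

definition nbrs :: "'a graph \<Rightarrow> 'a \<Rightarrow> 'a set" where
  "nbrs G v = {u. (v, u) \<in> edges G}"

definition deg :: "'a graph \<Rightarrow> 'a \<Rightarrow> nat" where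
  "deg G v = card (nbrs G v)"

definition del :: "'a graph \<Rightarrow> 'a \<Rightarrow> 'a graph" where
  "del G v = (verts G - {v}, {e \<in> edges G. fst e \<noteq> v \<and> snd e \<noteq> v})"

text \<open>Colours are 1,2,3,4. A list assignment is a function from vertices to sets of colours.\<close>
definition colors :: "nat set" where "colors = {1, 2, 3, 4}"

text \<open>Neighbour-ordering: for each (finite simple graph, list assignment, vertex, colour)
  an arbitrary but fixed enumeration of the neighbours of the vertex without repetitions.
  The theorem is quantified over all such orderings.\<close>
definition valid_order :: "('a graph \<Rightarrow> ('a \<Rightarrow> nat set) \<Rightarrow> 'a \<Rightarrow> nat \<Rightarrow> 'a list) \<Rightarrow> bool" where
  "valid_order nbo \<longleftrightarrow> (\<forall>G L v i. simple_graph G \<and> v \<in> verts G \<longrightarrow>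
      distinct (nbo G L v i) \<and> set (nbo G L v i) = nbrs G v)"

text \<open>L_{k,j} for a neighbour list N (0-indexed k: the first k neighbours lose colour j).\<close>
definition remc :: "('a \<Rightarrow> nat set) \<Rightarrow> 'a list \<Rightarrow> nat \<Rightarrow> nat \<Rightarrow> 'a \<Rightarrow> nat set" where
  "remc L N k j = (\<lambda>u. if u \<in> set (take k N) then L u - {j} else L u)"

definition reachable :: "'a graph \<Rightarrow> ('a \<Rightarrow> nat set) \<Rightarrow> 'a \<Rightarrow> bool" where
  "reachable G L v \<longleftrightarrow> simple_graph G \<and> v \<in> verts G
     \<and> (\<forall>u \<in> verts G. L u \<subseteq> colors \<and> deg G u \<le> 3 \<and> card (L u) \<ge> deg G u + 1)
     \<and> deg G v \<le> 2 \<and> card (L v) \<ge> deg G v + 2"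

text \<open>The procedure P(G,L,v,i,D), with D :: nat (the case D \<le> 0 is D = 0).
  Inputs not covered by the paper's cases (never reached from reachable triples) return 0.\<close>
primrec P :: "nat \<Rightarrow> ('a graph \<Rightarrow> ('a \<Rightarrow> nat set) \<Rightarrow> 'a \<Rightarrow> nat \<Rightarrow> 'a list)
                 \<Rightarrow> 'a graph \<Rightarrow> ('a \<Rightarrow> nat set) \<Rightarrow> 'a \<Rightarrow> nat \<Rightarrow> real" where
  "P 0 nbo G L v i = (if i \<notin> L v then 0 else 1 / real (card (L v)))"
| "P (Suc D) nbo G L v i =
    (if i \<notin> L v then 0
     else if deg G v = 0 then 1 / real (card (L v))
     else if deg G v = 1 then
       (let N = nbo G L v i; v1 = N ! 0; G' = del G v;
            x = P D nbo G' L v1 i in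
        if card (L v) = 2 then
          (let j = the_elem (L v - {i}); y = P D nbo G' L v1 j in (1 - x) / (2 - x - y))
        else if card (L v) = 4 then (1 - x) / 3
        else if card (L v) = 3 then
          (let j = the_elem (colors - L v); y = P D nbo G' L v1 j in (1 - x) / (2 + y))
        else 0)
     else if deg G v = 2 then
       (let N = nbo G L v i; a = N ! 0; b = N ! 1;
            ok = (deg G a \<ge> deg G b \<and>
                  (deg G a = 1 \<and> deg G b = 1 \<longrightarrow> (i \<notin> L a \<longrightarrow> i \<notin> L b)));
            v1 = (if ok then a else b); v2 = (if ok then b else a);
            G' = del G v; G'' = del G' v1;
            U = nbo G' L v1 i; d1 = length U;
            x = (\<lambda>k w. P D nbo G'' (remc L U k w) (U ! k) w);
            pr = (\<lambda>w. \<Prod>k<d1. (1 - x k w));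
            f = (\<lambda>j. if j \<notin> L v1 then 0 else pr j / (\<Sum>w\<in>L v1. pr w));
            y = (\<lambda>j. P D nbo G' (remc L [v1, v2] 1 j) v2 j)
        in (1 - f i) * (1 - y i) / (\<Sum>j\<in>L v. (1 - f j) * (1 - y j)))
     else if deg G v = 3 then
       (let N = nbo G L v i; G' = del G v;
            t = (\<lambda>j. \<Prod>k<3. (1 - P D nbo G' (remc L N k j) (N ! k) j))
        in t i / (\<Sum>j\<in>L v. t j))
     else 0)"

end

theory Submission
  imports Defs
begin

definition good :: "'a graph \<Rightarrow> ('a \<Rightarrow> nat set) \<Rightarrow> bool" where
  "good G L \<longleftrightarrow> simple_graph G \<and> (\<forall>u \<in> verts G. L u \<subseteq> colors \<and> deg G u \<le> 3 \<and> card (L u) \<ge> deg G u + 1)"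

lemma reach_good: "reachable G L v \<Longrightarrow> good G L"
  unfolding reachable_def good_def by auto

lemma verts_del[simp]: "verts (del G v) = verts G - {v}"
  unfolding del_def verts_def by simp

lemma simple_del: "simple_graph G \<Longrightarrow> simple_graph (del G v)"
  unfolding simple_graph_def del_def verts_def edges_def by auto

lemma nbrs_del: "u \<noteq> v \<Longrightarrow> nbrs (del G v) u = nbrs G u - {v}"
  unfolding nbrs_def del_def edges_def by auto

lemma finite_nbrs: "simple_graph G \<Longrightarrow> finite (nbrs G u)"
  unfolding simple_graph_def nbrs_def
  by (metis (no_types, lifting) mem_Collect_eq mem_Sigma_iff rev_finite_subset subset_eq)

lemma nbrs_sym: "simple_graph G \<Longrightarrow> u \<in> nbrs G v \<longleftrightarrow> v \<in> nbrs G u"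
  unfolding simple_graph_def nbrs_def by auto

lemma nbrs_verts: "simple_graph G \<Longrightarrow> u \<in> nbrs G v \<Longrightarrow> u \<in> verts G"
  unfolding simple_graph_def nbrs_def by auto

lemma nbrs_not_self: "simple_graph G \<Longrightarrow> u \<in> nbrs G v \<Longrightarrow> u \<noteq> v"
  unfolding simple_graph_def nbrs_def by auto

lemma deg_del: "simple_graph G \<Longrightarrow> u \<noteq> v \<Longrightarrow>
   deg (del G v) u = (if v \<in> nbrs G u then deg G u - 1 else deg G u)"
  unfolding deg_def using nbrs_del[of u v G] finite_nbrs[of G u] by (auto simp: card_Diff_singleton)

lemma deg_pos: "simple_graph G \<Longrightarrow> v \<in> nbrs G u \<Longrightarrow> deg G u \<ge> 1"
  unfolding deg_def using finite_nbrs
  by (metis One_nat_def Suc_leI card_gt_0_iff empty_iff)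

lemma finite_colors: "finite colors" unfolding colors_def by simp
lemma card_colors: "card colors = 4" unfolding colors_def by simp

lemma good_del:
  assumes g: "good G L" and vV: "v \<in> verts G"
    and c: "\<And>u. u \<in> verts G - {v} \<Longrightarrow> L' u \<subseteq> L u \<and>
             (L' u \<noteq> L u \<longrightarrow> u \<in> nbrs G v \<and> card (L u) \<le> card (L' u) + 1)"
  shows "good (del G v) L'"
  unfolding good_def
proof (intro conjI ballI)
  have s: "simple_graph G" using g unfolding good_def by blast
  have gall: "\<forall>u\<in>verts G. L u \<subseteq> colors \<and> deg G u \<le> 3 \<and> card (L u) \<ge> deg G u + 1"
    using g unfolding good_def by blast
  show "simple_graph (del G v)" using s by (rule simple_del)
  fix u assume uV: "u \<in> verts (del G v)"
  then have u: "u \<in> verts G" "u \<noteq> v" by auto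
  have gu: "L u \<subseteq> colors" "deg G u \<le> 3" "card (L u) \<ge> deg G u + 1" using bspec[OF gall u(1)] by blast+
  have cu: "L' u \<subseteq> L u" "L' u \<noteq> L u \<longrightarrow> u \<in> nbrs G v \<and> card (L u) \<le> card (L' u) + 1"
    using c u by blast+
  show "L' u \<subseteq> colors" using cu gu by blast
  show "deg (del G v) u \<le> 3" using deg_del[OF s u(2)] gu by auto
  show "card (L' u) \<ge> deg (del G v) u + 1"
  proof (cases "L' u = L u")
    case True then show ?thesis using deg_del[OF s u(2)] gu by auto
  next
    case False
    then have "u \<in> nbrs G v" "card (L u) \<le> card (L' u) + 1" using cu by auto
    then have vu: "v \<in> nbrs G u" using nbrs_sym[OF s] by blast
    then show ?thesis using deg_del[OF s u(2)] gu \<open>card (L u) \<le> card (L' u) + 1\<close> deg_pos[OF s vu]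
      by auto
  qed
qed

lemma reach_del:
  assumes g: "good G L" and vV: "v \<in> verts G"
    and c: "\<And>u. u \<in> verts G - {v} \<Longrightarrow> L' u \<subseteq> L u \<and>
             (L' u \<noteq> L u \<longrightarrow> u \<in> nbrs G v \<and> card (L u) \<le> card (L' u) + 1)"
    and w: "w \<in> nbrs G v" and Lw: "L' w = L w"
  shows "reachable (del G v) L' w"
proof -
  have s: "simple_graph G" using g unfolding good_def by blast
  have g': "good (del G v) L'" using good_del[OF g vV c] by blast
  have wV: "w \<in> verts G" "w \<noteq> v" using nbrs_verts[OF s w] nbrs_not_self[OF s w] by blast+
  have vw: "v \<in> nbrs G w" using w nbrs_sym[OF s] by blast
  have gw: "deg G w \<le> 3" "card (L w) \<ge> deg G w + 1" using g wV unfolding good_def by blast+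
  have dw: "deg (del G v) w = deg G w - 1" using deg_del[OF s wV(2)] vw by simp
  have "deg G w \<ge> 1" using deg_pos[OF s vw] .
  then show ?thesis using g' wV dw gw Lw unfolding reachable_def good_def by auto
qed

lemma remc_cases: "remc L N k j u = (if u \<in> set (take k N) then L u - {j} else L u)"
  unfolding remc_def by simp

lemma card_minus1: "finite A \<Longrightarrow> card A \<le> card (A - {j}) + 1"
  using card.remove[of A j] by (cases "j \<in> A") auto

lemma final_ineq:
  fixes f y :: "nat \<Rightarrow> real"
  assumes S: "finite S" "card S = 4" "i \<in> S"
    and f: "\<And>j. 0 \<le> f j \<and> f j \<le> 1" and y: "\<And>j. 0 \<le> y j \<and> y j \<le> 1/2"
    and sf: "(\<Sum>j\<in>S. f j) \<le> 1"
  shows "0 \<le> (1 - f i) * (1 - y i) / (\<Sum>j\<in>S. (1 - f j) * (1 - y j)) \<and>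
         (1 - f i) * (1 - y i) / (\<Sum>j\<in>S. (1 - f j) * (1 - y j)) \<le> 1/2"
proof -
  define t where "t j = (1 - f j) * (1 - y j)" for j
  have t0: "0 \<le> t j" for j using f[of j] y[of j] unfolding t_def by simp
  have ti: "t i \<le> 1" using f[of i] y[of i] unfolding t_def by (simp add: mult_le_one)
  have split: "(\<Sum>j\<in>S. t j) = t i + (\<Sum>j\<in>S-{i}. t j)"
    using S by (simp add: sum.remove)
  have "(\<Sum>j\<in>S-{i}. t j) \<ge> (\<Sum>j\<in>S-{i}. (1 - f j) / 2)"
  proof (rule sum_mono)
    fix j have "(1 - f j) * (1/2) \<le> (1 - f j) * (1 - y j)"
      using f[of j] y[of j] by (intro mult_left_mono) auto
    then show "(1 - f j) / 2 \<le> t j" unfolding t_def by simp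
  qed
  moreover have "(\<Sum>j\<in>S-{i}. (1 - f j) / 2) = (3 - (\<Sum>j\<in>S-{i}. f j)) / 2"
    using S by (simp add: sum_divide_distrib[symmetric] sum_subtractf)
  moreover have "(\<Sum>j\<in>S-{i}. f j) = (\<Sum>j\<in>S. f j) - f i"
    using S by (simp add: sum_diff1)
  moreover have "(3 - ((\<Sum>j\<in>S. f j) - f i)) / 2 \<ge> 1" using sf f[of i] by (simp add: field_simps)
  ultimately have rest: "(\<Sum>j\<in>S-{i}. t j) \<ge> 1" by (metis order.trans)
  have pos: "(\<Sum>j\<in>S. t j) > 0" using split rest t0[of i] by linarith
  have le: "t i \<le> 1/2 * (\<Sum>j\<in>S. t j)" using split rest ti by linarith
  have "t i / (\<Sum>j\<in>S. t j) \<le> 1/2" using pos le by (simp add: pos_divide_le_eq)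
  moreover have "0 \<le> t i / (\<Sum>j\<in>S. t j)" using pos t0[of i] by simp
  ultimately show ?thesis unfolding t_def by simp
qed

lemma sumf:
  fixes p :: "nat \<Rightarrow> real"
  assumes A: "finite A" "A \<subseteq> S" "finite S" and p: "\<And>w. 0 \<le> p w"
  shows "\<And>j. 0 \<le> (\<lambda>j. if j \<notin> A then 0 else p j / (\<Sum>w\<in>A. p w)) j
            \<and> (\<lambda>j. if j \<notin> A then 0 else p j / (\<Sum>w\<in>A. p w)) j \<le> 1"
    and "(\<Sum>j\<in>S. (\<lambda>j. if j \<notin> A then 0 else p j / (\<Sum>w\<in>A. p w)) j) \<le> 1"
proof -
  fix j
  have T0: "0 \<le> (\<Sum>w\<in>A. p w)" using p by (simp add: sum_nonneg)
  have "j \<in> A \<Longrightarrow> p j \<le> (\<Sum>w\<in>A. p w)" using A p by (intro member_le_sum) auto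
  then show "0 \<le> (\<lambda>j. if j \<notin> A then 0 else p j / (\<Sum>w\<in>A. p w)) j
            \<and> (\<lambda>j. if j \<notin> A then 0 else p j / (\<Sum>w\<in>A. p w)) j \<le> 1"
    using T0 p[of j] by (auto simp: divide_le_eq_1)
next
  have "(\<Sum>j\<in>S. (\<lambda>j. if j \<notin> A then 0 else p j / (\<Sum>w\<in>A. p w)) j)
       = (\<Sum>j\<in>A. (\<lambda>j. if j \<notin> A then 0 else p j / (\<Sum>w\<in>A. p w)) j)"
    using A by (intro sum.mono_neutral_right) auto
  also have "\<dots> = (\<Sum>j\<in>A. p j) / (\<Sum>w\<in>A. p w)"
    by (simp add: sum_divide_distrib[symmetric])
  also have "\<dots> \<le> 1" by (simp add: divide_le_eq_1)
  finally show "(\<Sum>j\<in>S. (\<lambda>j. if j \<notin> A then 0 else p j / (\<Sum>w\<in>A. p w)) j) \<le> 1" .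
qed

lemma P_notin: "i \<notin> L v \<Longrightarrow> P D nbo G L v i = 0"
  by (cases D) (simp_all only: P.simps if_True not_False_eq_True)
lemma P_deg0: "i \<in> L v \<Longrightarrow> deg G v = 0 \<Longrightarrow> P (Suc D) nbo G L v i = 1 / real (card (L v))"
  by (simp only: P.simps if_False if_True simp_thms)
lemma P_deg1: "i \<in> L v \<Longrightarrow> deg G v = 1 \<Longrightarrow> P (Suc D) nbo G L v i =
       (let N = nbo G L v i; v1 = N ! 0; G' = del G v;
            x = P D nbo G' L v1 i in
        if card (L v) = 2 then
          (let j = the_elem (L v - {i}); y = P D nbo G' L v1 j in (1 - x) / (2 - x - y))
        else if card (L v) = 4 then (1 - x) / 3
        else if card (L v) = 3 then
          (let j = the_elem (colors - L v); y = P D nbo G' L v1 j in (1 - x) / (2 + y))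
        else 0)"
  by (simp only: P.simps if_False if_True simp_thms) simp

lemma P_deg2:
  assumes "i \<in> L v" "deg G v = 2"
  shows "P (Suc D) nbo G L v i =
       (let N = nbo G L v i; a = N ! 0; b = N ! 1;
            ok = (deg G a \<ge> deg G b \<and>
                  (deg G a = 1 \<and> deg G b = 1 \<longrightarrow> (i \<notin> L a \<longrightarrow> i \<notin> L b)));
            v1 = (if ok then a else b); v2 = (if ok then b else a);
            G' = del G v; G'' = del G' v1;
            U = nbo G' L v1 i; d1 = length U;
            x = (\<lambda>k w. P D nbo G'' (remc L U k w) (U ! k) w);
            pr = (\<lambda>w. \<Prod>k<d1. (1 - x k w));
            f = (\<lambda>j. if j \<notin> L v1 then 0 else pr j / (\<Sum>w\<in>L v1. pr w));
            y = (\<lambda>j. P D nbo G' (remc L [v1, v2] 1 j) v2 j)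
        in (1 - f i) * (1 - y i) / (\<Sum>j\<in>L v. (1 - f j) * (1 - y j)))"
  using assms by (simp only: P.simps if_False if_True not_True_eq_False simp_thms) simp
lemma main:
  assumes vo: "valid_order nbo"
  shows "reachable G L v \<Longrightarrow> 0 \<le> P D nbo G L v i \<and> P D nbo G L v i \<le> 1/2"
proof (induction D arbitrary: G L v i)
  case 0
  show ?case
  proof (cases "i \<in> L v")
    case False thus ?thesis by simp
  next
    case True
    have "card (L v) \<ge> 2" using 0 unfolding reachable_def by auto
    then have "real (card (L v)) \<ge> 2" by simp
    thus ?thesis using True by (simp add: divide_simps)
  qed
next
  case (Suc D)
  note IH = Suc.IH
  have R: "reachable G L v" by fact
  have s: "simple_graph G" and vV: "v \<in> verts G" and dv: "deg G v \<le> 2"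
    and cv: "card (L v) \<ge> deg G v + 2" and Lc: "L v \<subseteq> colors"
    using R unfolding reachable_def by auto
  have g: "good G L" using R by (rule reach_good)
  have cv4: "card (L v) \<le> 4" using card_mono[OF finite_colors Lc] card_colors by simp
  have vo': "distinct (nbo G L v i)" "set (nbo G L v i) = nbrs G v"
    using vo s vV unfolding valid_order_def by blast+
  show ?case
  proof (cases "i \<in> L v")
    case False thus ?thesis unfolding P_notin[of i L v D nbo G, OF False] by simp
  next
    case iL: True
    consider "deg G v = 0" | "deg G v = 1" | "deg G v = 2" using dv by linarith
    then show ?thesis
    proof cases
      case 1
      then have "real (card (L v)) \<ge> 2" using cv by simp
      then show ?thesis unfolding P_deg0[of i L v G D nbo, OF iL 1] by (simp add: divide_simps)
    next
      case 2
      define N where "N = nbo G L v i"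
      define v1 where "v1 = N ! 0"
      define G' where "G' = del G v"
      have lenN: "length N = 1" using vo' 2 unfolding N_def deg_def by (metis distinct_card)
      have v1n: "v1 \<in> nbrs G v" using vo' lenN unfolding v1_def N_def
        by (metis nth_mem zero_less_one)
      have R1: "reachable G' L v1" unfolding G'_def by (rule reach_del[OF g vV _ v1n]) auto
      have b: "\<And>j. 0 \<le> P D nbo G' L v1 j \<and> P D nbo G' L v1 j \<le> 1/2" using R1 by (rule IH)
      have c34: "card (L v) = 3 \<or> card (L v) = 4" using cv cv4 2 by linarith
      define x where "x = P D nbo G' L v1 i"
      have eq: "P (Suc D) nbo G L v i = (if card (L v) = 4 then (1 - x)/3
                 else (1-x)/(2 + P D nbo G' L v1 (the_elem (colors - L v))))"
      proof -
        have c2: "(card (L v) = 2) = False" using cv 2 by simp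
        show ?thesis unfolding P_deg1[of i L v G D nbo, OF iL 2] Let_def c2 if_False x_def N_def v1_def G'_def
          using c34 by auto
      qed
      define yy where "yy = P D nbo G' L v1 (the_elem (colors - L v))"
      have xb: "0 \<le> x" "x \<le> 1/2" using b[of i] unfolding x_def by auto
      have yb: "0 \<le> yy" "yy \<le> 1/2" using b[of "the_elem (colors - L v)"] unfolding yy_def by auto
      have A: "0 \<le> (1 - x)/3 \<and> (1 - x)/3 \<le> 1/2" using xb by simp
      have pos: "0 < 2 + yy" using yb by simp
      have "1 - x \<le> 1/2 * (2 + yy)" using xb yb by simp
      then have "(1 - x)/(2 + yy) \<le> 1/2" using pos by (simp add: pos_divide_le_eq)
      moreover have "0 \<le> (1 - x)/(2 + yy)" using pos xb by simp
      ultimately have B: "0 \<le> (1 - x)/(2 + yy) \<and> (1 - x)/(2 + yy) \<le> 1/2" by blast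
      show ?thesis unfolding eq yy_def[symmetric] using A B by simp
    next
      case 3
      have Lv: "L v = colors" using card_subset_eq[OF finite_colors Lc] card_colors cv 3 cv4 by simp
      define N where "N = nbo G L v i"
      define a where "a = N ! 0"
      define b where "b = N ! 1"
      define ok where "ok = (deg G a \<ge> deg G b \<and>
                  (deg G a = 1 \<and> deg G b = 1 \<longrightarrow> (i \<notin> L a \<longrightarrow> i \<notin> L b)))"
      define v1 where "v1 = (if ok then a else b)"
      define v2 where "v2 = (if ok then b else a)"
      define G' where "G' = del G v"
      define G'' where "G'' = del G' v1"
      define U where "U = nbo G' L v1 i"
      define d1 where "d1 = length U"
      define x where "x = (\<lambda>k w. P D nbo G'' (remc L U k w) (U ! k) w)"
      define pr where "pr = (\<lambda>w. \<Prod>k<d1. (1 - x k w))"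
      define f where "f = (\<lambda>j. if j \<notin> L v1 then 0 else pr j / (\<Sum>w\<in>L v1. pr w))"
      define y where "y = (\<lambda>j. P D nbo G' (remc L [v1, v2] 1 j) v2 j)"
      have eq: "P (Suc D) nbo G L v i = (1 - f i) * (1 - y i) / (\<Sum>j\<in>L v. (1 - f j) * (1 - y j))"
        unfolding P_deg2[of i L v G D nbo, OF iL 3] Let_def f_def y_def pr_def x_def d1_def U_def
          G''_def G'_def v1_def v2_def ok_def a_def b_def N_def
        by (rule refl)
      have lenN: "length N = 2" using vo' 3 unfolding N_def deg_def by (metis distinct_card)
      have abn1: "a \<in> nbrs G v" using vo'(2) lenN unfolding a_def N_def
        by (metis nth_mem zero_less_numeral)
      have abn2: "b \<in> nbrs G v" using vo'(2) lenN unfolding b_def N_def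
        by (metis nth_mem one_less_numeral_iff semiring_norm(76))
      have abn3: "a \<noteq> b" using vo'(1) lenN nth_eq_iff_index_eq[of N 0 1]
        unfolding a_def b_def N_def by simp
      note abn = abn1 abn2 abn3
      have v1n: "v1 \<in> nbrs G v" and v2n: "v2 \<in> nbrs G v" and v12: "v1 \<noteq> v2"
        using abn unfolding v1_def v2_def by auto
      have Lfin: "\<And>u. u \<in> verts G \<Longrightarrow> finite (L u)"
        using g unfolding good_def by (meson finite_colors rev_finite_subset)
      have yb: "0 \<le> y j \<and> y j \<le> 1/2" for j
      proof -
        have "reachable G' (remc L [v1, v2] 1 j) v2" unfolding G'_def
        proof (rule reach_del[OF g vV _ v2n])
          fix u assume u: "u \<in> verts G - {v}"
          have fin: "finite (L u)" using Lfin u by blast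
          show "remc L [v1, v2] 1 j u \<subseteq> L u \<and> (remc L [v1, v2] 1 j u \<noteq> L u \<longrightarrow>
                 u \<in> nbrs G v \<and> card (L u) \<le> card (remc L [v1, v2] 1 j u) + 1)"
          proof (cases "u = v1")
            case True then show ?thesis using v1n card_minus1[OF fin] by (simp add: remc_cases)
          next
            case False then show ?thesis by (simp add: remc_cases)
          qed
        next
          show "remc L [v1, v2] 1 j v2 = L v2" using v12 by (auto simp: remc_cases)
        qed
        then show ?thesis unfolding y_def by (rule IH)
      qed
      have sG': "simple_graph G'" unfolding G'_def using simple_del[OF s] .
      have gG': "good G' L" unfolding G'_def by (rule good_del[OF g vV]) auto
      have v1V: "v1 \<in> verts G'" using nbrs_verts[OF s v1n] nbrs_not_self[OF s v1n] unfolding G'_def by simp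
      have voU: "distinct U" "set U = nbrs G' v1"
        using vo sG' v1V unfolding valid_order_def U_def by blast+
      have LfinG': "\<And>u. u \<in> verts G' \<Longrightarrow> finite (L u)"
        using gG' unfolding good_def by (meson finite_colors rev_finite_subset)
      have xb: "0 \<le> x k w \<and> x k w \<le> 1/2" if k: "k < d1" for k w
      proof -
        have Ukn: "U ! k \<in> nbrs G' v1" using voU k unfolding d1_def by (metis nth_mem)
        have "distinct (take k U @ U ! k # drop (Suc k) U)"
          using voU(1) id_take_nth_drop[of k U] k unfolding d1_def by simp
        then have Uk: "U ! k \<notin> set (take k U)" by simp
        have "reachable G'' (remc L U k w) (U ! k)" unfolding G''_def
        proof (rule reach_del[OF gG' v1V _ Ukn])
          fix u assume u: "u \<in> verts G' - {v1}"
          have fin: "finite (L u)" using LfinG' u by blast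
          show "remc L U k w u \<subseteq> L u \<and> (remc L U k w u \<noteq> L u \<longrightarrow>
                 u \<in> nbrs G' v1 \<and> card (L u) \<le> card (remc L U k w u) + 1)"
          proof (cases "u \<in> set (take k U)")
            case True
            then have "u \<in> nbrs G' v1" using voU(2) set_take_subset[of k U] by blast
            then show ?thesis using True card_minus1[OF fin] by (simp add: remc_cases)
          next
            case False then show ?thesis by (simp add: remc_cases)
          qed
        next
          show "remc L U k w (U ! k) = L (U ! k)" using Uk by (auto simp: remc_cases)
        qed
        then show ?thesis unfolding x_def by (rule IH)
      qed
      have prn: "0 \<le> pr w" for w unfolding pr_def
      proof (intro prod_nonneg)
        fix k assume "k \<in> {..<d1}"
        then have "x k w \<le> 1/2" using xb by blast
        then show "0 \<le> 1 - x k w" by simp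
      qed
      have v1G: "v1 \<in> verts G" using nbrs_verts[OF s v1n] .
      have Lv1: "L v1 \<subseteq> L v" using g v1G Lv unfolding good_def by auto
      have finLv: "finite (L v)" using Lv finite_colors by simp
      note sf0 = sumf[of "L v1" "L v" pr, OF Lfin[OF v1G] Lv1 finLv prn]
      have fb: "\<And>j. 0 \<le> f j \<and> f j \<le> 1" unfolding f_def using sf0(1) by simp
      have sf: "(\<Sum>j\<in>L v. f j) \<le> 1" unfolding f_def using sf0(2) by simp
      show ?thesis unfolding eq
        by (rule final_ineq[OF _ _ iL fb yb sf]) (use Lv finite_colors card_colors in auto)
    qed
  qed
qed

theorem proposition7:
  fixes G :: "'a graph" and L :: "'a \<Rightarrow> nat set" and v :: 'a and i :: nat and D :: nat
    and nbo :: "'a graph \<Rightarrow> ('a \<Rightarrow> nat set) \<Rightarrow> 'a \<Rightarrow> nat \<Rightarrow> 'a list"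
  assumes "valid_order nbo"
    and "reachable G L v"
    and "i \<in> colors"
  shows "0 \<le> P D nbo G L v i \<and> P D nbo G L v i \<le> 1 / 2"
  using main[OF assms(1) assms(2)] .

end
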